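(* Let $Y,\widehat{Y},A$ be $\{0,1\}$-valued random variables on a common probability space with $\Pr\{A=a,Y=y\}>0$ for all $a,y$, and let $\ell:\{0,1\}^2\to\mathbb{R}$ be a loss function. Consider the optimization problem $$\min_{\widetilde{Y}}\ \mathbb{E}\,\ell(\widetilde{Y},Y)\quad\text{s.t.}\quad \gamma_a(\widetilde{Y})\in P_a(\widehat{Y})\ \text{for all } a\in\{0,1\},\qquad \gamma_0(\widetilde{Y})=\gamma_1(\widetilde{Y}),$$ where $\widetilde{Y}$ ranges over predictors derived from $(\widehat{Y},A)$, parametrized by the four numbers $\Pr\{\widetilde{Y}=1\mid\widehat{Y}=\hat y,A=a\}\in[0,1]$. This problem is a linear program in these four variables whose coefficients can be computed from the joint distribution of $(\widehat{Y},A,Y)$. Moreover, its solution is an optimal equalized odds predictor derived from $\widehat{Y}$ and $A$, i.e. it minimizes $\mathbb{E}\,\ell(\widetilde{Y},Y)$ among all predictors derived from $(\widehat{Y},A)$ that satisfy equalized odds.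
   Context: For a $\{0,1\}$-valued predictor $Z$ and $a\in\{0,1\}$, $\gamma_a(Z)=\left(\Pr\{Z=1\mid A=a,Y=0\},\ \Pr\{Z=1\mid A=a,Y=1\}\right)$, and $P_a(\widehat{Y})=\mathrm{convhull}\{(0,0),\gamma_a(\widehat{Y}),\gamma_a(1-\widehat{Y}),(1,1)\}$. A predictor is derived from $(\widehat{Y},A)$ if it is a possibly randomized function of $(\widehat{Y},A)$ alone (randomness independent of everything else). A predictor $\widetilde{Y}$ satisfies equalized odds (with respect to $A$ and $Y$) if $\widetilde{Y}$ and $A$ are independent conditional on $Y$; for binary variables this is equivalent to $\gamma_0(\widetilde{Y})=\gamma_1(\widetilde{Y})$. *)

theory Defs
  imports "HOL-Analysis.Analysis"
begin

text \<open>The joint distribution of (Yhat, A, Y) on {0,1}^3 (False = 0, True = 1) is given by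
  its probability mass function p yh a y = Pr{Yhat = yh, A = a, Y = y}.
  A predictor Ytilde derived from (Yhat, A) is given by its parameters
  q yh a = Pr{Ytilde = 1 | Yhat = yh, A = a}; its randomness being independent of
  everything else, Pr{Ytilde = 1, Yhat = yh, A = a, Y = y} = p yh a y * q yh a.\<close>

type_synonym joint = "bool \<Rightarrow> bool \<Rightarrow> bool \<Rightarrow> real"
type_synonym derived = "bool \<Rightarrow> bool \<Rightarrow> real"

definition is_joint_pmf :: "joint \<Rightarrow> bool" where
  "is_joint_pmf p \<longleftrightarrow> (\<forall>yh a y. 0 \<le> p yh a y) \<and>
     (\<Sum>yh\<in>UNIV. \<Sum>a\<in>UNIV. \<Sum>y\<in>UNIV. p yh a y) = 1"

definition prAY :: "joint \<Rightarrow> bool \<Rightarrow> bool \<Rightarrow> real" where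
  "prAY p a y = (\<Sum>yh\<in>UNIV. p yh a y)"

definition is_derived :: "derived \<Rightarrow> bool" where
  "is_derived q \<longleftrightarrow> (\<forall>yh a. 0 \<le> q yh a \<and> q yh a \<le> 1)"

definition cond_rate :: "joint \<Rightarrow> derived \<Rightarrow> bool \<Rightarrow> bool \<Rightarrow> real" where
  "cond_rate p q a y = (\<Sum>yh\<in>UNIV. p yh a y * q yh a) / prAY p a y"

definition gamma :: "joint \<Rightarrow> derived \<Rightarrow> bool \<Rightarrow> real \<times> real" where
  "gamma p q a = (cond_rate p q a False, cond_rate p q a True)"

definition pred_Yhat :: derived where
  "pred_Yhat = (\<lambda>yh a. if yh then 1 else 0)"

definition pred_not_Yhat :: derived where
  "pred_not_Yhat = (\<lambda>yh a. if yh then 0 else 1)"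

definition P_region :: "joint \<Rightarrow> bool \<Rightarrow> (real \<times> real) set" where
  "P_region p a = convex hull {(0,0), gamma p pred_Yhat a, gamma p pred_not_Yhat a, (1,1)}"

text \<open>E l(Ytilde, Y), the loss l taking (prediction, true label).\<close>
definition expected_loss :: "joint \<Rightarrow> (bool \<Rightarrow> bool \<Rightarrow> real) \<Rightarrow> derived \<Rightarrow> real" where
  "expected_loss p l q = (\<Sum>yh\<in>UNIV. \<Sum>a\<in>UNIV. \<Sum>y\<in>UNIV.
      p yh a y * (q yh a * l True y + (1 - q yh a) * l False y))"

definition equalized_odds :: "joint \<Rightarrow> derived \<Rightarrow> bool" where
  "equalized_odds p q \<longleftrightarrow> gamma p q False = gamma p q True"

definition lp_feasible :: "joint \<Rightarrow> derived \<Rightarrow> bool" where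
  "lp_feasible p q \<longleftrightarrow> is_derived q \<and> (\<forall>a. gamma p q a \<in> P_region p a)
      \<and> gamma p q False = gamma p q True"

definition lp_solution :: "joint \<Rightarrow> (bool \<Rightarrow> bool \<Rightarrow> real) \<Rightarrow> derived \<Rightarrow> bool" where
  "lp_solution p l q \<longleftrightarrow> lp_feasible p q \<and>
      (\<forall>q'. lp_feasible p q' \<longrightarrow> expected_loss p l q \<le> expected_loss p l q')"

definition linform :: "(bool \<Rightarrow> bool \<Rightarrow> real) \<Rightarrow> derived \<Rightarrow> real" where
  "linform w q = (\<Sum>yh\<in>UNIV. \<Sum>a\<in>UNIV. w yh a * q yh a)"

end

theory Submission
  imports Defs
begin

lemma gamma_decomp:
  assumes "prAY p a False > 0" "prAY p a True > 0"
  shows "gamma p q a = q True a *\<^sub>R gamma p pred_Yhat a + q False a *\<^sub>R gamma p pred_not_Yhat a"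
    and "gamma p pred_Yhat a + gamma p pred_not_Yhat a = (1,1)"
  using assms
  by (auto simp: gamma_def cond_rate_def pred_Yhat_def pred_not_Yhat_def UNIV_bool prAY_def
      add_divide_distrib [symmetric] field_simps)

lemma gamma_in_P:
  assumes "prAY p a False > 0" "prAY p a True > 0" "is_derived q"
  shows "gamma p q a \<in> P_region p a"
proof -
  define gY where "gY = gamma p pred_Yhat a"
  define gN where "gN = gamma p pred_not_Yhat a"
  have g: "gamma p q a = q True a *\<^sub>R gY + q False a *\<^sub>R gN"
    unfolding gY_def gN_def by (rule gamma_decomp(1)[OF assms(1,2)])
  have s: "gY + gN = (1,1)"
    unfolding gY_def gN_def by (rule gamma_decomp(2)[OF assms(1,2)])
  have qb: "0 \<le> q True a" "q True a \<le> 1" "0 \<le> q False a" "q False a \<le> 1"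
    using assms(3) by (auto simp: is_derived_def)
  show ?thesis
  proof (cases "q False a \<le> q True a")
    case True
    have "gamma p q a = (1 - q True a) *\<^sub>R (0,0) + (q True a - q False a) *\<^sub>R gY + q False a *\<^sub>R (1,1)"
      unfolding g s[symmetric] by (simp add: prod_eq_iff algebra_simps)
    hence "gamma p q a \<in> convex hull {(0,0), gY, (1,1)}"
      unfolding convex_hull_3 using True qb by (intro CollectI exI[of _ "1 - q True a"]
        exI[of _ "q True a - q False a"] exI[of _ "q False a"]) auto
    moreover have "convex hull {(0,0), gY, (1,1)} \<subseteq> P_region p a"
      unfolding P_region_def gY_def by (rule hull_mono) auto
    ultimately show ?thesis by blast
  next
    case False
    have "gamma p q a = (1 - q False a) *\<^sub>R (0,0) + (q False a - q True a) *\<^sub>R gN + q True a *\<^sub>R (1,1)"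
      unfolding g s[symmetric] by (simp add: prod_eq_iff algebra_simps)
    hence "gamma p q a \<in> convex hull {(0,0), gN, (1,1)}"
      unfolding convex_hull_3 using False qb by (intro CollectI exI[of _ "1 - q False a"]
        exI[of _ "q False a - q True a"] exI[of _ "q True a"]) auto
    moreover have "convex hull {(0,0), gN, (1,1)} \<subseteq> P_region p a"
      unfolding P_region_def gN_def by (rule hull_mono) auto
    ultimately show ?thesis by blast
  qed
qed

lemma feasible_iff:
  assumes "\<forall>a y. prAY p a y > 0"
  shows "lp_feasible p q \<longleftrightarrow> is_derived q \<and> gamma p q False = gamma p q True"
  using gamma_in_P assms unfolding lp_feasible_def by blast

theorem proposition4p4:
  fixes p :: joint and l :: "bool \<Rightarrow> bool \<Rightarrow> real"
  assumes "is_joint_pmf p"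
    and "\<forall>a y. prAY p a y > 0"
  shows "(\<exists>c0 c. \<forall>q. expected_loss p l q = c0 + linform c q)
       \<and> (\<exists>S :: ((bool \<Rightarrow> bool \<Rightarrow> real) \<times> real) set. finite S \<and>
            (\<forall>q. lp_feasible p q \<longleftrightarrow> (\<forall>(w, b)\<in>S. linform w q \<le> b)))
       \<and> (\<forall>q. lp_solution p l q \<longrightarrow>
            is_derived q \<and> equalized_odds p q \<and>
            (\<forall>q'. is_derived q' \<and> equalized_odds p q' \<longrightarrow>
                  expected_loss p l q \<le> expected_loss p l q'))"
proof (intro conjI)
  show "\<exists>c0 c. \<forall>q. expected_loss p l q = c0 + linform c q"
    by (rule exI[of _ "\<Sum>yh\<in>UNIV. \<Sum>a\<in>UNIV. \<Sum>y\<in>UNIV. p yh a y * l False y"],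
        rule exI[of _ "\<lambda>yh a. \<Sum>y\<in>UNIV. p yh a y * (l True y - l False y)"])
      (simp add: expected_loss_def linform_def UNIV_bool algebra_simps)
next
  define e :: "bool \<Rightarrow> bool \<Rightarrow> bool \<Rightarrow> bool \<Rightarrow> real" where
    "e = (\<lambda>yh a yh' a'. if yh' = yh \<and> a' = a then 1 else 0)"
  define d :: "bool \<Rightarrow> bool \<Rightarrow> bool \<Rightarrow> real" where
    "d = (\<lambda>y yh a. if a then - p yh True y / prAY p True y else p yh False y / prAY p False y)"
  have le: "linform (e yh a) q = q yh a" for yh a q
    by (cases yh; cases a) (simp_all add: linform_def e_def UNIV_bool)
  have le2: "linform (- e yh a) q = - q yh a" for yh a q
    by (cases yh; cases a) (simp_all add: linform_def e_def UNIV_bool)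
  have ld: "linform (d y) q = cond_rate p q False y - cond_rate p q True y" for y q
    by (simp add: linform_def d_def cond_rate_def UNIV_bool add_divide_distrib diff_divide_distrib)
  have ld2: "linform (- d y) q = cond_rate p q True y - cond_rate p q False y" for y q
    by (simp add: linform_def d_def cond_rate_def UNIV_bool add_divide_distrib diff_divide_distrib)
  define S where "S = range (\<lambda>(yh,a). (e yh a, 1::real)) \<union> range (\<lambda>(yh,a). (- e yh a, 0))
     \<union> range (\<lambda>y. (d y, 0)) \<union> range (\<lambda>y. (- d y, 0))"
  show "\<exists>S :: ((bool \<Rightarrow> bool \<Rightarrow> real) \<times> real) set. finite S \<and>
            (\<forall>q. lp_feasible p q \<longleftrightarrow> (\<forall>(w, b)\<in>S. linform w q \<le> b))"
  proof (intro exI conjI allI)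
    show "finite S" unfolding S_def by simp
    fix q
    have "(\<forall>(w, b)\<in>S. linform w q \<le> b) \<longleftrightarrow>
      (\<forall>yh a. q yh a \<le> 1 \<and> 0 \<le> q yh a) \<and> (\<forall>y. cond_rate p q False y = cond_rate p q True y)"
    proof
      assume H: "\<forall>(w, b)\<in>S. linform w q \<le> b"
      have m1: "(e yh a, 1) \<in> S" for yh a unfolding S_def
        by (rule UnI1, rule UnI1, rule UnI1, rule image_eqI[where x="(yh,a)"]) auto
      have m2: "(- e yh a, 0) \<in> S" for yh a unfolding S_def
        by (rule UnI1, rule UnI1, rule UnI2, rule image_eqI[where x="(yh,a)"]) auto
      have m3: "(d y, 0) \<in> S" for y unfolding S_def by blast
      have m4: "(- d y, 0) \<in> S" for y unfolding S_def by blast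
      have h1: "q yh a \<le> 1" for yh a using H m1[of yh a] le[of yh a q] by fastforce
      have h2: "0 \<le> q yh a" for yh a using H m2[of yh a] le2[of yh a q] by fastforce
      have h3: "cond_rate p q False y = cond_rate p q True y" for y
      proof -
        have "linform (d y) q \<le> 0" using H m3[of y] by fastforce
        moreover have "linform (- d y) q \<le> 0" using H m4[of y] by fastforce
        ultimately show ?thesis using ld[of y q] ld2[of y q] by linarith
      qed
      show "(\<forall>yh a. q yh a \<le> 1 \<and> 0 \<le> q yh a) \<and> (\<forall>y. cond_rate p q False y = cond_rate p q True y)"
        using h1 h2 h3 by blast
    next
      assume H: "(\<forall>yh a. q yh a \<le> 1 \<and> 0 \<le> q yh a) \<and> (\<forall>y. cond_rate p q False y = cond_rate p q True y)"
      show "\<forall>(w, b)\<in>S. linform w q \<le> b"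
        unfolding S_def using H by (auto simp: le le2 ld ld2)
    qed
    also have "\<dots> \<longleftrightarrow> is_derived q \<and> gamma p q False = gamma p q True"
      by (auto simp: is_derived_def gamma_def) (metis (full_types))
    finally show "lp_feasible p q \<longleftrightarrow> (\<forall>(w, b)\<in>S. linform w q \<le> b)"
      using feasible_iff[OF assms(2)] by simp
  qed
next
  show "\<forall>q. lp_solution p l q \<longrightarrow> is_derived q \<and> equalized_odds p q \<and>
            (\<forall>q'. is_derived q' \<and> equalized_odds p q' \<longrightarrow>
                  expected_loss p l q \<le> expected_loss p l q')"
    using feasible_iff[OF assms(2)] unfolding lp_solution_def equalized_odds_def by blast
qed

end
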